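(* Suppose a unitary $C$ is written in the form $$C=H_{\mathbf a}P_{\mathbf d}Z_{\mathbf D}\,\mathbf H\,e^{\mathrm{i}\phi}X_{\mathbf u}Z_{\mathbf v}P_{\mathbf b}Z_{\mathbf B}X_{\mathbf A}$$ with $\mathbf a,\mathbf d,\mathbf u,\mathbf v,\mathbf b\in\mathbb F_2^n$, $\mathbf D,\mathbf B\in\mathcal B_n$, $\mathbf A\in GL_n(\mathbb F_2)$ and $\phi\in\{k\pi/4:k\in\mathbb Z\}$. Then for every $i\in\{0,\dots,n-1\}$, the product $H_iC$ can also be written in this form (with possibly different data $\mathbf a,\mathbf d,\mathbf D,\phi,\mathbf u,\mathbf v,\mathbf b,\mathbf B,\mathbf A$ of the same types).
   Context: Qubits are labelled $0,\dots,n-1$; computational basis $\{|x\rangle:x\in\mathbb F_2^n\}$; $\mathrm{i}=\sqrt{-1}$. One-qubit gates $\mathtt H=\frac1{\sqrt2}\begin{pmatrix}1&1\\1&-1\end{pmatrix}$, $\mathtt P=\mathrm{diag}(1,\mathrm{i})$, $\mathtt Z=\mathrm{diag}(1,-1)$, $\mathtt X=\begin{pmatrix}0&1\\1&0\end{pmatrix}$; $U_i$ denotes the gate $\mathtt U$ acting on qubit $i$, and $U_{\mathbf a}=\prod_iU_i^{a_i}$ for $\mathbf a\in\mathbb F_2^n$. $\mathbf H=\prod_{i=0}^{n-1}H_i$. For $\mathbf A\in GL_n(\mathbb F_2)$, $X_{\mathbf A}|x\rangle=|\mathbf Ax\rangle$. $\mathcal B_n$ is the set of symmetric $n\times n$ matrices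 over $\mathbb F_2$ with zero diagonal, and for $\mathbf B\in\mathcal B_n$, $Z_{\mathbf B}|x\rangle=(-1)^{\sum_{i<j}b_{ij}x_ix_j}|x\rangle$. *)

theory Defs
  imports Complex_Main "HOL-Library.Z2"
begin

text \<open>A computational basis state / a vector in F_2^n is a function x :: nat => bit
  with x i = 0 for all i >= n (coordinates 0..n-1).
  An operator on the n-qubit space is given by its matrix elements
  M x y = <x|M|y>, and is required (by construction) to vanish outside the
  basis states.\<close>

definition states :: "nat \<Rightarrow> (nat \<Rightarrow> bit) set" where
  "states n = {x. \<forall>i\<ge>n. x i = 0}"

type_synonym op = "(nat \<Rightarrow> bit) \<Rightarrow> (nat \<Rightarrow> bit) \<Rightarrow> complex"

definition f2mat :: "nat \<Rightarrow> (nat \<Rightarrow> nat \<Rightarrow> bit) \<Rightarrow> bool" where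
  "f2mat n A \<longleftrightarrow> (\<forall>i j. (n \<le> i \<or> n \<le> j) \<longrightarrow> A i j = 0)"

definition f2matmul :: "nat \<Rightarrow> (nat \<Rightarrow> nat \<Rightarrow> bit) \<Rightarrow> (nat \<Rightarrow> nat \<Rightarrow> bit) \<Rightarrow> (nat \<Rightarrow> nat \<Rightarrow> bit)" where
  "f2matmul n A B = (\<lambda>i j. \<Sum>k<n. A i k * B k j)"

definition f2id :: "nat \<Rightarrow> (nat \<Rightarrow> nat \<Rightarrow> bit)" where
  "f2id n = (\<lambda>i j. if i = j \<and> i < n then 1 else 0)"

definition GLn :: "nat \<Rightarrow> (nat \<Rightarrow> nat \<Rightarrow> bit) \<Rightarrow> bool" where
  "GLn n A \<longleftrightarrow> f2mat n A \<and>
     (\<exists>A'. f2mat n A' \<and> f2matmul n A A' = f2id n \<and> f2matmul n A' A = f2id n)"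

definition Bn :: "nat \<Rightarrow> (nat \<Rightarrow> nat \<Rightarrow> bit) \<Rightarrow> bool" where
  "Bn n B \<longleftrightarrow> f2mat n B \<and> (\<forall>i j. B i j = B j i) \<and> (\<forall>i. B i i = 0)"

definition matvec :: "nat \<Rightarrow> (nat \<Rightarrow> nat \<Rightarrow> bit) \<Rightarrow> (nat \<Rightarrow> bit) \<Rightarrow> (nat \<Rightarrow> bit)" where
  "matvec n A x = (\<lambda>i. \<Sum>j<n. A i j * x j)"

definition omul :: "nat \<Rightarrow> op \<Rightarrow> op \<Rightarrow> op" where
  "omul n M N = (\<lambda>x y. \<Sum>z\<in>states n. M x z * N z y)"

definition oid :: "nat \<Rightarrow> op" where
  "oid n = (\<lambda>x y. if x \<in> states n \<and> x = y then 1 else 0)"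

definition oscal :: "nat \<Rightarrow> complex \<Rightarrow> op" where
  "oscal n c = (\<lambda>x y. if x \<in> states n \<and> x = y then c else 0)"

definition gate1 :: "nat \<Rightarrow> nat \<Rightarrow> (bit \<Rightarrow> bit \<Rightarrow> complex) \<Rightarrow> op" where
  "gate1 n i U = (\<lambda>x y. if x \<in> states n \<and> y \<in> states n \<and> (\<forall>j. j \<noteq> i \<longrightarrow> x j = y j)
                        then U (x i) (y i) else 0)"

definition Hm :: "bit \<Rightarrow> bit \<Rightarrow> complex" where
  "Hm b c = (if b = 1 \<and> c = 1 then -1 else 1) / complex_of_real (sqrt 2)"

definition Pm :: "bit \<Rightarrow> bit \<Rightarrow> complex" where
  "Pm b c = (if b = c then (if b = 1 then \<i> else 1) else 0)"

definition Zm :: "bit \<Rightarrow> bit \<Rightarrow> complex" where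
  "Zm b c = (if b = c then (if b = 1 then -1 else 1) else 0)"

definition Xm :: "bit \<Rightarrow> bit \<Rightarrow> complex" where
  "Xm b c = (if b = c then 0 else 1)"

definition gatevec :: "nat \<Rightarrow> (bit \<Rightarrow> bit \<Rightarrow> complex) \<Rightarrow> (nat \<Rightarrow> bit) \<Rightarrow> op" where
  "gatevec n U a = foldr (omul n)
      (map (\<lambda>i. if a i = 1 then gate1 n i U else oid n) [0..<n]) (oid n)"

definition Hall :: "nat \<Rightarrow> op" where
  "Hall n = foldr (omul n) (map (\<lambda>i. gate1 n i Hm) [0..<n]) (oid n)"

definition XA :: "nat \<Rightarrow> (nat \<Rightarrow> nat \<Rightarrow> bit) \<Rightarrow> op" where
  "XA n A = (\<lambda>x y. if x \<in> states n \<and> y \<in> states n \<and> x = matvec n A y then 1 else 0)"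

definition ZB :: "nat \<Rightarrow> (nat \<Rightarrow> nat \<Rightarrow> bit) \<Rightarrow> op" where
  "ZB n B = (\<lambda>x y. if x \<in> states n \<and> x = y then
        (if (\<Sum>j<n. \<Sum>i<j. B i j * x i * x j) = 1 then -1 else 1) else 0)"

definition nf :: "nat \<Rightarrow> (nat \<Rightarrow> bit) \<Rightarrow> (nat \<Rightarrow> bit) \<Rightarrow> (nat \<Rightarrow> nat \<Rightarrow> bit) \<Rightarrow> int
     \<Rightarrow> (nat \<Rightarrow> bit) \<Rightarrow> (nat \<Rightarrow> bit) \<Rightarrow> (nat \<Rightarrow> bit) \<Rightarrow> (nat \<Rightarrow> nat \<Rightarrow> bit)
     \<Rightarrow> (nat \<Rightarrow> nat \<Rightarrow> bit) \<Rightarrow> op" where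
  "nf n a d D k u v b B A =
     omul n (gatevec n Hm a) (omul n (gatevec n Pm d) (omul n (ZB n D) (omul n (Hall n)
     (omul n (oscal n (exp (\<i> * complex_of_real (real_of_int k * pi / 4))))
     (omul n (gatevec n Xm u) (omul n (gatevec n Zm v) (omul n (gatevec n Pm b)
     (omul n (ZB n B) (XA n A)))))))))"

definition has_nf :: "nat \<Rightarrow> op \<Rightarrow> bool" where
  "has_nf n C \<longleftrightarrow> (\<exists>a d D k u v b B A.
      a \<in> states n \<and> d \<in> states n \<and> u \<in> states n \<and> v \<in> states n \<and> b \<in> states n \<and>
      Bn n D \<and> Bn n B \<and> GLn n A \<and> C = nf n a d D k u v b B A)"

end

theory Submission
  imports Defs
begin

lemma bit_cases2: "(b::bit) = 0 \<or> b = 1"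
  by (cases "b = 0") auto

lemma finite_states: "finite (states n)"
proof -
  have "states n \<subseteq> (\<lambda>S i. if i \<in> S then (1::bit) else 0) ` Pow {..<n}"
  proof
    fix x assume x: "x \<in> states n"
    have "x = (\<lambda>i. if i \<in> {j. j < n \<and> x j = 1} then 1 else 0)"
      using x by (auto simp: states_def fun_eq_iff)
    then show "x \<in> (\<lambda>S i. if i \<in> S then (1::bit) else 0) ` Pow {..<n}" by blast
  qed
  then show ?thesis by (rule finite_subset) auto
qed

definition wf :: "nat \<Rightarrow> op \<Rightarrow> bool" where
  "wf n M \<longleftrightarrow> (\<forall>x y. M x y \<noteq> 0 \<longrightarrow> x \<in> states n \<and> y \<in> states n)"

lemma omul_assoc: "omul n (omul n A B) C = omul n A (omul n B C)"
proof (rule ext, rule ext)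
  fix x y
  have "omul n (omul n A B) C x y = (\<Sum>z\<in>states n. \<Sum>w\<in>states n. A x w * B w z * C z y)"
    unfolding omul_def by (simp add: sum_distrib_right)
  also have "\<dots> = (\<Sum>w\<in>states n. \<Sum>z\<in>states n. A x w * B w z * C z y)"
    by (rule sum.swap)
  also have "\<dots> = omul n A (omul n B C) x y"
    unfolding omul_def by (simp add: sum_distrib_left mult.assoc)
  finally show "omul n (omul n A B) C x y = omul n A (omul n B C) x y" .
qed

lemma wf_omul: "wf n M \<Longrightarrow> wf n N \<Longrightarrow> wf n (omul n M N)"
  unfolding wf_def omul_def
  by (metis (no_types, lifting) mult_eq_0_iff sum.neutral)

lemma wf_oid: "wf n (oid n)" by (simp add: wf_def oid_def)
lemma wf_gate1: "wf n (gate1 n i U)" by (simp add: wf_def gate1_def)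

lemma oid_left: "wf n M \<Longrightarrow> omul n (oid n) M = M"
proof -
  assume w: "wf n M"
  show ?thesis
  proof (rule ext, rule ext)
    fix x y
    have "omul n (oid n) M x y = (\<Sum>z\<in>states n. if z = x then (if x \<in> states n then M x y else 0) else 0)"
      unfolding omul_def oid_def by (rule sum.cong) auto
    also have "\<dots> = (if x \<in> states n then M x y else 0)"
      by (simp add: finite_states)
    also have "\<dots> = M x y" using w by (auto simp: wf_def)
    finally show "omul n (oid n) M x y = M x y" .
  qed
qed

lemma oid_right: "wf n M \<Longrightarrow> omul n M (oid n) = M"
proof -
  assume w: "wf n M"
  show ?thesis
  proof (rule ext, rule ext)
    fix x y
    have "omul n M (oid n) x y = (\<Sum>z\<in>states n. if z = y then (if y \<in> states n then M x y else 0) else 0)"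
      unfolding omul_def oid_def by (rule sum.cong) auto
    also have "\<dots> = (if y \<in> states n then M x y else 0)"
      by (simp add: finite_states)
    also have "\<dots> = M x y" using w by (auto simp: wf_def)
    finally show "omul n M (oid n) x y = M x y" .
  qed
qed

lemma upd_states: "x \<in> states n \<Longrightarrow> i < n \<Longrightarrow> x(i := c) \<in> states n"
  by (auto simp: states_def)

lemma gate_left:
  assumes "i < n"
  shows "omul n (gate1 n i U) M x y =
    (if x \<in> states n then U (x i) 0 * M (x(i:=0)) y + U (x i) 1 * M (x(i:=1)) y else 0)"
proof (cases "x \<in> states n")
  case False
  then show ?thesis by (simp add: omul_def gate1_def)
next
  case True
  let ?S = "{x(i:=0), x(i:=1)}"
  have sub: "?S \<subseteq> states n" using True assms upd_states by auto
  have "omul n (gate1 n i U) M x y = (\<Sum>z\<in>?S. gate1 n i U x z * M z y)"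
    unfolding omul_def
  proof (rule sum.mono_neutral_right[OF finite_states sub], rule ballI)
    fix z assume z: "z \<in> states n - ?S"
    have "\<not> (\<forall>j. j \<noteq> i \<longrightarrow> x j = z j)"
    proof
      assume a: "\<forall>j. j \<noteq> i \<longrightarrow> x j = z j"
      have "z = x(i := z i)" using a by (auto simp: fun_eq_iff)
      then show False using z bit_cases2[of "z i"] by auto
    qed
    then show "gate1 n i U x z * M z y = 0" by (auto simp: gate1_def)
  qed
  also have "\<dots> = U (x i) 0 * M (x(i:=0)) y + U (x i) 1 * M (x(i:=1)) y"
    using True sub by (simp add: gate1_def fun_eq_iff)
  finally show ?thesis using True by simp
qed

lemma sqrt2_sq: "complex_of_real (sqrt 2) * complex_of_real (sqrt 2) = 2"
proof -
  have "complex_of_real (sqrt 2) * complex_of_real (sqrt 2) = complex_of_real (sqrt 2 * sqrt 2)"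
    by (simp only: of_real_mult)
  also have "sqrt 2 * sqrt 2 = (2::real)" by simp
  finally show ?thesis by simp
qed

definition rr :: complex where "rr = 1 / complex_of_real (sqrt 2)"

lemma hm_sq: "rr * rr = 1/2"
proof -
  have "rr * rr = 1 / (complex_of_real (sqrt 2) * complex_of_real (sqrt 2))"
    unfolding rr_def by simp
  also have "\<dots> = 1/2" by (simp only: sqrt2_sq)
  finally show ?thesis .
qed

lemma Hm_vals: "Hm 0 0 = rr" "Hm 0 1 = rr" "Hm 1 0 = rr" "Hm 1 1 = - rr"
  unfolding Hm_def rr_def
  by (simp_all only: zero_neq_one simp_thms if_False if_True minus_divide_left)

lemma gate_sq: "i < n \<Longrightarrow> omul n (gate1 n i Hm) (gate1 n i Hm) = oid n"
proof (rule ext, rule ext)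
  fix x y assume i: "i < n"
  show "omul n (gate1 n i Hm) (gate1 n i Hm) x y = oid n x y"
  proof (cases "x \<in> states n \<and> y \<in> states n \<and> (\<forall>j. j \<noteq> i \<longrightarrow> x j = y j)")
    case True
    have xy: "x = y \<longleftrightarrow> x i = y i" using True by (auto simp: fun_eq_iff)
    have agree: "\<And>c. \<forall>j. j \<noteq> i \<longrightarrow> (x(i:=c)) j = y j" using True by auto
    have st: "\<And>c. x(i:=c) \<in> states n" using True i upd_states by blast
    have g: "\<And>c. gate1 n i Hm (x(i:=c)) y = Hm c (y i)"
      unfolding gate1_def using agree st True by simp
    have "Hm (x i) 0 * Hm 0 (y i) + Hm (x i) 1 * Hm 1 (y i) = (if x i = y i then 1 else 0)"
      using bit_cases2[of "x i"] bit_cases2[of "y i"]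
      by (elim disjE) (simp_all only: Hm_vals, simp_all add: hm_sq)
    then show ?thesis
      unfolding gate_left[OF i] g using True xy by (simp add: oid_def)
  next
    case False
    have g: "gate1 n i Hm (x(i:=c)) y = 0" if xs: "x \<in> states n" for c
      using False xs unfolding gate1_def by auto
    have "oid n x y = 0" using False by (auto simp: oid_def)
    then show ?thesis
      unfolding gate_left[OF i] by (cases "x \<in> states n") (simp_all add: g)
  qed
qed

lemma gate_pair_aux:
  assumes ij: "i \<noteq> j" and i: "i < n" and x: "x \<in> states n"
  shows "gate1 n j V (x(i:=c)) y =
    (if y \<in> states n \<and> c = y i \<and> (\<forall>k. k \<noteq> i \<and> k \<noteq> j \<longrightarrow> x k = y k) then V (x j) (y j) else 0)"
proof -
  have st: "x(i:=c) \<in> states n" using x i by (rule upd_states)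
  have eq: "(\<forall>k. k \<noteq> j \<longrightarrow> (x(i:=c)) k = y k) \<longleftrightarrow> c = y i \<and> (\<forall>k. k \<noteq> i \<and> k \<noteq> j \<longrightarrow> x k = y k)"
    using ij by (auto simp: fun_upd_apply)
  have xj: "(x(i:=c)) j = x j" using ij by simp
  show ?thesis unfolding gate1_def eq xj using st by (simp del: fun_upd_apply)
qed

lemma gate_pair:
  assumes ij: "i \<noteq> j" and i: "i < n"
  shows "omul n (gate1 n i U) (gate1 n j V) x y =
    (if x \<in> states n \<and> y \<in> states n \<and> (\<forall>k. k \<noteq> i \<and> k \<noteq> j \<longrightarrow> x k = y k)
     then U (x i) (y i) * V (x j) (y j) else 0)"
proof (cases "x \<in> states n")
  case False then show ?thesis unfolding gate_left[OF i] by simp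
next
  case True
  show ?thesis unfolding gate_left[OF i] gate_pair_aux[OF ij i True]
    using True bit_cases2[of "y i"] by auto
qed

lemma gate_comm:
  assumes ij: "i \<noteq> j" and i: "i < n" and j: "j < n"
  shows "omul n (gate1 n i U) (gate1 n j V) = omul n (gate1 n j V) (gate1 n i U)"
proof (rule ext, rule ext)
  fix x y
  have ji: "j \<noteq> i" using ij by simp
  show "omul n (gate1 n i U) (gate1 n j V) x y = omul n (gate1 n j V) (gate1 n i U) x y"
    unfolding gate_pair[OF ij i] gate_pair[OF ji j] by (auto simp: mult.commute)
qed

definition FF :: "nat \<Rightarrow> (nat \<Rightarrow> bit) \<Rightarrow> nat \<Rightarrow> op" where
  "FF n a = (\<lambda>j. if a j = 1 then gate1 n j Hm else oid n)"

definition PP :: "nat \<Rightarrow> (nat \<Rightarrow> bit) \<Rightarrow> nat list \<Rightarrow> op" where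
  "PP n a js = foldr (omul n) (map (FF n a) js) (oid n)"

lemma PP_Nil: "PP n a [] = oid n" by (simp add: PP_def)
lemma PP_Cons: "PP n a (j # js) = omul n (FF n a j) (PP n a js)" by (simp add: PP_def)

lemma wf_FF: "wf n (FF n a j)" by (simp add: FF_def wf_oid wf_gate1)

lemma wf_PP: "wf n (PP n a js)"
  by (induction js) (simp_all add: PP_Nil PP_Cons wf_oid wf_omul wf_FF)

lemma PP_cong: "(\<forall>j\<in>set js. a j = b j) \<Longrightarrow> PP n a js = PP n b js"
  by (induction js) (simp_all add: PP_Nil PP_Cons FF_def)

lemma FF_comm:
  assumes "j \<noteq> i" "i < n" "j < n"
  shows "omul n (gate1 n i Hm) (FF n a j) = omul n (FF n a j) (gate1 n i Hm)"
  using assms gate_comm[of i j n Hm Hm]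
  by (auto simp: FF_def oid_left oid_right wf_gate1)

lemma push:
  assumes "distinct js" "set js \<subseteq> {..<n}" "i < n"
  shows "(i \<in> set js \<longrightarrow> omul n (gate1 n i Hm) (PP n a js) = PP n (a(i := a i + 1)) js) \<and>
         (i \<notin> set js \<longrightarrow> omul n (gate1 n i Hm) (PP n a js) = omul n (PP n a js) (gate1 n i Hm))"
  using assms
proof (induction js)
  case Nil
  then show ?case by (simp add: PP_Nil oid_left oid_right wf_gate1)
next
  case (Cons j js)
  let ?g = "gate1 n i Hm"
  let ?a = "a(i := a i + 1)"
  have IH: "(i \<in> set js \<longrightarrow> omul n ?g (PP n a js) = PP n ?a js) \<and>
         (i \<notin> set js \<longrightarrow> omul n ?g (PP n a js) = omul n (PP n a js) ?g)"
  proof -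
    have d: "distinct js" and sj: "set js \<subseteq> {..<n}" using Cons.prems by auto
    show ?thesis by (rule Cons.IH[OF d sj Cons.prems(3)])
  qed
  have jn: "j < n" using Cons by auto
  show ?case
  proof (cases "j = i")
    case True
    have ni: "i \<notin> set js" using Cons True by auto
    have R: "PP n ?a js = PP n a js" using ni by (intro PP_cong) auto
    show ?thesis
    proof (cases "a i = 1")
      case True
      have sq: "omul n ?g (omul n ?g (PP n a js)) = PP n a js"
        by (simp add: omul_assoc[symmetric] gate_sq[OF Cons.prems(3)] oid_left wf_PP)
      have f1: "FF n a i = ?g" using True by (simp add: FF_def)
      have f2: "FF n ?a i = oid n" using True by (simp add: FF_def)
      have "omul n ?g (PP n a (j#js)) = PP n ?a (j#js)"
        unfolding PP_Cons \<open>j = i\<close> f1 f2 oid_left[OF wf_PP] R sq ..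
      moreover have "i \<in> set (j#js)" using \<open>j = i\<close> by simp
      ultimately show ?thesis by blast
    next
      case False
      then have a0: "a i = 0" using bit_cases2[of "a i"] by auto
      have f1: "FF n a i = oid n" using a0 by (simp add: FF_def)
      have f2: "FF n ?a i = ?g" using a0 by (simp add: FF_def)
      have "omul n ?g (PP n a (j#js)) = PP n ?a (j#js)"
        unfolding PP_Cons \<open>j = i\<close> f1 f2 oid_left[OF wf_PP] R ..
      moreover have "i \<in> set (j#js)" using \<open>j = i\<close> by simp
      ultimately show ?thesis by blast
    qed
  next
    case False
    have Fj: "FF n ?a j = FF n a j" using False by (simp add: FF_def)
    have c: "omul n ?g (omul n (FF n a j) R) = omul n (FF n a j) (omul n ?g R)" for R
      by (simp add: omul_assoc[symmetric] FF_comm[OF False Cons.prems(3) jn])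
    show ?thesis
    proof (cases "i \<in> set js")
      case True
      have ih: "omul n ?g (PP n a js) = PP n ?a js" using IH True by blast
      have "omul n ?g (PP n a (j#js)) = PP n ?a (j#js)"
        unfolding PP_Cons c ih Fj ..
      moreover have "i \<in> set (j#js)" using True by simp
      ultimately show ?thesis by blast
    next
      case nin: False
      have ih: "omul n ?g (PP n a js) = omul n (PP n a js) ?g" using IH nin by blast
      have "omul n ?g (PP n a (j#js)) = omul n (PP n a (j#js)) ?g"
        unfolding PP_Cons c ih omul_assoc ..
      moreover have "i \<notin> set (j # js)" using nin False by simp
      ultimately show ?thesis by blast
    qed
  qed
qed

lemma gatevec_PP: "gatevec n U a = foldr (omul n) (map (\<lambda>i. if a i = 1 then gate1 n i U else oid n) [0..<n]) (oid n)"
  by (simp add: gatevec_def)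

lemma H_gatevec:
  assumes "i < n"
  shows "omul n (gate1 n i Hm) (gatevec n Hm a) = gatevec n Hm (a(i := a i + 1))"
proof -
  have e: "gatevec n Hm b = PP n b [0..<n]" for b
    by (simp add: gatevec_def PP_def FF_def)
  have s1: "set [0..<n] \<subseteq> {..<n}" by auto
  have s2: "i \<in> set [0..<n]" using assms by simp
  show ?thesis unfolding e using push[OF distinct_upt s1 assms] s2 by blast
qed

theorem lemma4p1:
  fixes n :: nat and C :: op and i :: nat
  assumes "has_nf n C" and "i < n"
  shows "has_nf n (omul n (gate1 n i Hm) C)"
proof -
  obtain a d D k u v b B A where
    h: "a \<in> states n" "d \<in> states n" "u \<in> states n" "v \<in> states n" "b \<in> states n"
      "Bn n D" "Bn n B" "GLn n A" and C: "C = nf n a d D k u v b B A"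
    using assms(1) unfolding has_nf_def by blast
  have a': "a(i := a i + 1) \<in> states n" using h(1) assms(2) by (rule upd_states)
  have "omul n (gate1 n i Hm) C = nf n (a(i := a i + 1)) d D k u v b B A"
    unfolding C nf_def omul_assoc[symmetric] H_gatevec[OF assms(2)] ..
  then show ?thesis unfolding has_nf_def using h a' by blast
qed

end
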